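(* Let $s\in[0,1)$, let $\Omega\subset\mathbb{R}^N$ be a bounded open Lipschitz set, let $V,f\in L^\infty(\Omega)$, and let $u\in\mathbb{H}^s(\Omega)$ be a weak solution of $\mathcal{D}^s_\Omega u+V(x)u=f$ in $\Omega$, i.e. $$\mathcal{E}_s(u,\phi)+\int_\Omega V u\phi\,dx=\int_\Omega f\phi\,dx\qquad\text{for all }\phi\in\mathbb{H}^s(\Omega).$$ Then $u\in L^\infty(\Omega)$, and there exists a constant $c_0>0$ depending only on $N$, $\Omega$, $\|V\|_{L^\infty(\Omega)}$, $\|f\|_{L^\infty(\Omega)}$ and $\|u\|_{L^2(\Omega)}$, and independent of $s$, such that $\|u\|_{L^\infty(\Omega)}\le c_0$.
   Context: A bounded open set $\Omega\subset\mathbb{R}^N$ is a Lipschitz set if each boundary point has a neighborhood in which $\partial\Omega$ is, after rotation, the graph of a Lipschitz function. For $s\in[0,1)$: $\mathbb{H}^s(\Omega)=\{u\in L^2(\Omega):\int_\Omega\int_\Omega\frac{(u(x)-u(y))^2}{|x-y|^{N+2s}}dxdy<\infty\}$ and $\mathcal{E}_s(u,v)=\frac12\int_\Omega\int_\Omega\frac{(u(x)-u(y))(v(x)-v(y))}{|x-y|^{N+2s}}dxdy$; the operator $\mathcal{D}^s_\Omega u(x)=\lim_{\varepsilon\to0^+}\int_{\Omega\setminus B_\varepsilon(x)}\frac{u(x)-u(y)}{|x-y|^{N+2s}}dy$ is the one whose weak form is $\mathcal{E}_s$. *)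

theory Defs
  imports "HOL-Analysis.Analysis" "HOL-Probability.Essential_Supremum"
begin

text \<open>Lipschitz set: every boundary point p has an open neighbourhood U, a unit
  direction e (the rotated N-th axis) and a Lipschitz function g defined on the
  hyperplane orthogonal to e (a copy of R^(N-1)), such that inside U the set is the
  region below the graph of g and its boundary is the graph of g.\<close>
definition lipschitz_set :: "'a::euclidean_space set \<Rightarrow> bool" where
  "lipschitz_set \<Omega> \<longleftrightarrow>
     (\<forall>p \<in> frontier \<Omega>. \<exists>U e g L.
        open U \<and> p \<in> U \<and> norm e = 1 \<and>
        lipschitz_on L {z. z \<bullet> e = 0} (g :: 'a \<Rightarrow> real) \<and>
        \<Omega> \<inter> U = {x \<in> U. x \<bullet> e < g (x - (x \<bullet> e) *\<^sub>R e)} \<and>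
        frontier \<Omega> \<inter> U = {x \<in> U. x \<bullet> e = g (x - (x \<bullet> e) *\<^sub>R e)})"

definition Linf_norm :: "'a::euclidean_space set \<Rightarrow> ('a \<Rightarrow> real) \<Rightarrow> real" where
  "Linf_norm \<Omega> u = real_of_ereal (esssup (lebesgue_on \<Omega>) (\<lambda>x. ereal \<bar>u x\<bar>))"

definition Linf :: "'a::euclidean_space set \<Rightarrow> ('a \<Rightarrow> real) set" where
  "Linf \<Omega> = {u. u \<in> borel_measurable (lebesgue_on \<Omega>) \<and>
                  esssup (lebesgue_on \<Omega>) (\<lambda>x. ereal \<bar>u x\<bar>) < \<infinity>}"

definition L2 :: "'a::euclidean_space set \<Rightarrow> ('a \<Rightarrow> real) set" where
  "L2 \<Omega> = {u. u \<in> borel_measurable (lebesgue_on \<Omega>) \<and>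
                integrable (lebesgue_on \<Omega>) (\<lambda>x. (u x)\<^sup>2)}"

definition L2_norm :: "'a::euclidean_space set \<Rightarrow> ('a \<Rightarrow> real) \<Rightarrow> real" where
  "L2_norm \<Omega> u = sqrt (integral\<^sup>L (lebesgue_on \<Omega>) (\<lambda>x. (u x)\<^sup>2))"

definition kern :: "real \<Rightarrow> 'a::euclidean_space \<Rightarrow> 'a \<Rightarrow> real" where
  "kern s x y = 1 / norm (x - y) powr (real DIM('a) + 2 * s)"

definition Hs :: "real \<Rightarrow> 'a::euclidean_space set \<Rightarrow> ('a \<Rightarrow> real) set" where
  "Hs s \<Omega> = {u. u \<in> L2 \<Omega> \<and>
     integrable (lebesgue_on \<Omega> \<Otimes>\<^sub>M lebesgue_on \<Omega>)
       (\<lambda>(x, y). (u x - u y)\<^sup>2 * kern s x y)}"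

definition Es :: "real \<Rightarrow> 'a::euclidean_space set \<Rightarrow> ('a \<Rightarrow> real) \<Rightarrow> ('a \<Rightarrow> real) \<Rightarrow> real" where
  "Es s \<Omega> u v = 1/2 * integral\<^sup>L (lebesgue_on \<Omega> \<Otimes>\<^sub>M lebesgue_on \<Omega>)
       (\<lambda>(x, y). (u x - u y) * (v x - v y) * kern s x y)"

definition weak_solution ::
  "real \<Rightarrow> 'a::euclidean_space set \<Rightarrow> ('a \<Rightarrow> real) \<Rightarrow> ('a \<Rightarrow> real) \<Rightarrow> ('a \<Rightarrow> real) \<Rightarrow> bool" where
  "weak_solution s \<Omega> V f u \<longleftrightarrow> u \<in> Hs s \<Omega> \<and>
     (\<forall>\<phi> \<in> Hs s \<Omega>. Es s \<Omega> u \<phi> + integral\<^sup>L (lebesgue_on \<Omega>) (\<lambda>x. V x * u x * \<phi> x)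
                   = integral\<^sup>L (lebesgue_on \<Omega>) (\<lambda>x. f x * \<phi> x))"

end

theory Submission
  imports Defs
begin


lemma proj_orth:
  fixes e z :: "'a::euclidean_space"
  assumes "norm e = 1"
  shows "(z - (z \<bullet> e) *\<^sub>R e) \<bullet> e = 0"
proof -
  have "e \<bullet> e = 1" using assms by (simp add: dot_square_norm)
  then show ?thesis by (simp add: inner_diff_left)
qed

lemma cone_at:
  fixes \<Omega> :: "'a::euclidean_space set"
  assumes op: "open \<Omega>" and lip: "lipschitz_set \<Omega>" and xc: "x \<in> closure \<Omega>"
  shows "\<exists>e \<delta> t0. norm e = 1 \<and> 0 < \<delta> \<and> \<delta> \<le> 1/2 \<and> 0 < t0 \<and>
           (\<forall>t. 0 < t \<and> t \<le> t0 \<longrightarrow> ball (x - t *\<^sub>R e) (\<delta> * t) \<subseteq> \<Omega>)"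
proof (cases "x \<in> \<Omega>")
  case True
  then obtain r where r: "r > 0" "ball x r \<subseteq> \<Omega>" using op open_contains_ball by blast
  obtain e :: 'a where e: "e \<in> Basis" using nonempty_Basis by blast
  have ne: "norm e = 1" using e by simp
  have "ball (x - t *\<^sub>R e) (1/2 * t) \<subseteq> \<Omega>" if t: "0 < t" "t \<le> r/2" for t
  proof
    fix y assume y: "y \<in> ball (x - t *\<^sub>R e) (1/2 * t)"
    have "dist x y \<le> dist x (x - t *\<^sub>R e) + dist (x - t *\<^sub>R e) y" by (rule dist_triangle)
    also have "dist x (x - t *\<^sub>R e) = t" using ne t by (simp add: dist_norm)
    finally have "dist x y < r" using y t by (simp add: dist_commute) 
    then show "y \<in> \<Omega>" using r by auto
  qed
  then show ?thesis using ne r by (intro exI[of _ e] exI[of _ "1/2"] exI[of _ "r/2"]) auto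
next
  case False
  with xc op have xf: "x \<in> frontier \<Omega>" by (simp add: frontier_def interior_open)
  from lip xf have "\<exists>U e g L.
        open U \<and> x \<in> U \<and> norm e = 1 \<and>
        lipschitz_on L {z. z \<bullet> e = 0} (g :: 'a \<Rightarrow> real) \<and>
        \<Omega> \<inter> U = {x \<in> U. x \<bullet> e < g (x - (x \<bullet> e) *\<^sub>R e)} \<and>
        frontier \<Omega> \<inter> U = {x \<in> U. x \<bullet> e = g (x - (x \<bullet> e) *\<^sub>R e)}"
    unfolding lipschitz_set_def by (rule bspec)
  then obtain U e g L where U: "open U" "x \<in> U" and ne: "norm e = 1"
    and lg: "lipschitz_on L {z. z \<bullet> e = 0} (g :: 'a \<Rightarrow> real)"
    and OU: "\<Omega> \<inter> U = {y \<in> U. y \<bullet> e < g (y - (y \<bullet> e) *\<^sub>R e)}"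
    and FU: "frontier \<Omega> \<inter> U = {y \<in> U. y \<bullet> e = g (y - (y \<bullet> e) *\<^sub>R e)}"
    by (elim exE conjE) 
  have L0: "L \<ge> 0" using lg by (simp add: lipschitz_on_def)
  obtain r where r: "r > 0" "ball x r \<subseteq> U" using U open_contains_ball by blast
  define \<delta> where "\<delta> = 1 / (2 * L + 2)"
  have d0: "0 < \<delta>" "\<delta> \<le> 1/2" using L0 by (auto simp: \<delta>_def field_simps)
  have d1: "\<delta> * (1 + 2 * L) \<le> 1" using L0 by (simp add: \<delta>_def field_simps)
  have xe: "x \<bullet> e = g (x - (x \<bullet> e) *\<^sub>R e)" using FU xf U by blast
  have "ball (x - t *\<^sub>R e) (\<delta> * t) \<subseteq> \<Omega>" if t: "0 < t" "t \<le> r/2" for t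
  proof
    fix y assume y: "y \<in> ball (x - t *\<^sub>R e) (\<delta> * t)"
    define v where "v = y - (x - t *\<^sub>R e)"
    have nv: "norm v < \<delta> * t" using y by (simp add: v_def dist_norm norm_minus_commute)
    have yv: "y = x - t *\<^sub>R e + v" by (simp add: v_def)
    have "dist x y \<le> dist x (x - t *\<^sub>R e) + dist (x - t *\<^sub>R e) y" by (rule dist_triangle)
    also have "dist x (x - t *\<^sub>R e) = t" using ne t by (simp add: dist_norm)
    finally have "dist x y \<le> t + dist (x - t *\<^sub>R e) y" .
    moreover have "\<delta> * t \<le> 1/2 * t" using d0 t by (intro mult_right_mono) auto
    moreover have "dist (x - t *\<^sub>R e) y < \<delta> * t" using y by simp
    ultimately have "dist x y < r" using t by linarith
    then have yU: "y \<in> U" using r by auto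
    have ee: "e \<bullet> e = 1" using ne by (simp add: dot_square_norm)
    have ve: "\<bar>v \<bullet> e\<bar> \<le> norm v" using Cauchy_Schwarz_ineq2[of v e] ne by simp
    have ye: "y \<bullet> e = x \<bullet> e - t + v \<bullet> e" by (simp add: yv inner_add_left inner_diff_left ee)
    have py: "y - (y \<bullet> e) *\<^sub>R e = (x - (x \<bullet> e) *\<^sub>R e) + (v - (v \<bullet> e) *\<^sub>R e)"
      by (simp add: ye yv algebra_simps, simp add: ee)
    have lg1: "\<bar>g (y - (y \<bullet> e) *\<^sub>R e) - g (x - (x \<bullet> e) *\<^sub>R e)\<bar>
          \<le> L * dist (y - (y \<bullet> e) *\<^sub>R e) (x - (x \<bullet> e) *\<^sub>R e)"
      using lipschitz_onD[OF lg, of "y - (y \<bullet> e) *\<^sub>R e" "x - (x \<bullet> e) *\<^sub>R e"]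
        proj_orth[OF ne] by (simp add: dist_real_def)
    have dd: "dist (y - (y \<bullet> e) *\<^sub>R e) (x - (x \<bullet> e) *\<^sub>R e) = norm (v - (v \<bullet> e) *\<^sub>R e)"
      by (simp add: py dist_norm)
    have "norm (v - (v \<bullet> e) *\<^sub>R e) \<le> norm v + \<bar>v \<bullet> e\<bar>"
      using norm_triangle_ineq4[of v "(v \<bullet> e) *\<^sub>R e"] ne by simp
    then have "norm (v - (v \<bullet> e) *\<^sub>R e) \<le> 2 * norm v" using ve by linarith
    then have "L * norm (v - (v \<bullet> e) *\<^sub>R e) \<le> L * (2 * norm v)" using L0 by (rule mult_left_mono)
    then have "\<bar>g (y - (y \<bullet> e) *\<^sub>R e) - g (x - (x \<bullet> e) *\<^sub>R e)\<bar> \<le> L * (2 * norm v)"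
      using lg1[unfolded dd] by linarith
    then have "g (y - (y \<bullet> e) *\<^sub>R e) \<ge> x \<bullet> e - L * (2 * norm v)" using xe by linarith
    moreover have "L * (2 * norm v) \<le> L * (2 * (\<delta> * t))" using nv L0
      by (intro mult_left_mono) auto
    moreover have "y \<bullet> e < x \<bullet> e - t + \<delta> * t" using ye ve nv by linarith
    moreover have "- t + \<delta> * t \<le> - (L * (2 * (\<delta> * t)))"
    proof -
      have "\<delta> * (1 + 2 * L) * t \<le> 1 * t" using mult_right_mono[OF d1, of t] t by simp
      then show ?thesis by (simp add: algebra_simps)
    qed
    ultimately have "y \<bullet> e < g (y - (y \<bullet> e) *\<^sub>R e)" by linarith
    then show "y \<in> \<Omega>" using OU yU by blast
  qed
  then show ?thesis using ne r d0 by (intro exI[of _ e] exI[of _ \<delta>] exI[of _ "r/2"]) auto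
qed


definition phi :: "real \<Rightarrow> 'a::euclidean_space \<Rightarrow> real" where
  "phi m z = 1 / max (1/m) (norm z ^ DIM('a))"

lemma max_pos: "m > 0 \<Longrightarrow> 0 < max (1/m) (a::real)"
  by (simp add: less_max_iff_disj)

lemma phi_nonneg: "m > 0 \<Longrightarrow> 0 \<le> phi m z"
  unfolding phi_def by (simp add: le_max_iff_disj)

lemma inv_anti: "0 < (y::real) \<Longrightarrow> y \<le> x \<Longrightarrow> 1 / x \<le> 1 / y"
  by (simp add: frac_le)

lemma phi_le: "m > 0 \<Longrightarrow> phi m z \<le> m"
  unfolding phi_def using inv_anti[of "1/m" "max (1/m) (norm z ^ DIM('a))"] by simp

lemma phi_mono: assumes "0 < m" "m \<le> m'" shows "phi m z \<le> phi m' z"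
proof -
  have h: "1/m' \<le> 1/m" using assms by (intro divide_left_mono) auto
  have "max (1/m') (norm z ^ DIM('a)) \<le> max (1/m) (norm z ^ DIM('a))"
    by (rule max.mono[OF h order_refl])
  moreover have "0 < max (1/m') (norm z ^ DIM('a))" using assms by (intro max_pos) auto
  ultimately show ?thesis unfolding phi_def by (rule inv_anti[rotated])
qed

lemma continuous_phi: "m > 0 \<Longrightarrow> continuous_on UNIV (phi m :: 'a::euclidean_space \<Rightarrow> real)"
  unfolding phi_def using max_pos[of m] by (intro continuous_intros) (auto simp: less_le)

lemma measure_ball_leb: "measure lebesgue (ball (c::'a::euclidean_space) r) = unit_ball_vol (DIM('a)) * r ^ DIM('a)"
  if "r \<ge> 0" using content_ball[OF that] by simp

lemma idm: "(\<lambda>x. x) \<in> borel_measurable (lebesgue_on (S::'a::euclidean_space set))"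
  by (intro measurable_restrict_space1 measurable_completion) simp

lemma phi_meas: "m > 0 \<Longrightarrow> (\<lambda>y. phi m (x - y)) \<in> borel_measurable (lebesgue_on (S::'a::euclidean_space set))"
proof -
  assume m: "m > 0"
  have "(\<lambda>y. phi m (x - y)) \<in> borel_measurable borel"
    by (intro borel_measurable_continuous_onI continuous_on_compose2[OF continuous_phi[OF m]] continuous_intros) auto
  from measurable_compose[OF idm this] show ?thesis .
qed

lemma diverge:
  fixes \<Omega> :: "'a::euclidean_space set" and x e :: 'a
  assumes bo: "bounded \<Omega>" and op: "open \<Omega>" and ne: "norm e = 1" and d: "0 < \<delta>" "\<delta> \<le> 1/2"
    and t0: "0 < t0"
    and balls: "\<forall>t. 0 < t \<and> t \<le> t0 \<longrightarrow> ball (x - t *\<^sub>R e) (\<delta> * t) \<subseteq> \<Omega>"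
  shows "\<exists>m>0. (\<integral>y. phi m (x - y) \<partial>lebesgue_on \<Omega>) > T"
proof -
  define N where "N = DIM('a)"
  define q where "q = (1-\<delta>)/(1+\<delta>)"
  have q: "0 < q" "q \<le> 1" using d by (auto simp: q_def field_simps)
  define t where "t j = t0 * q^j" for j :: nat
  have tpos: "t j > 0" for j using t0 q by (simp add: t_def)
  have tle: "t j \<le> t0" for j using t0 q by (simp add: t_def power_le_one mult_left_le)
  have tmono: "t j \<le> q * t i" if "i < j" for i j
  proof -
    have "q ^ j \<le> q ^ Suc i" using q that by (intro power_decreasing) auto
    then show ?thesis using t0 by (simp add: t_def mult_left_mono algebra_simps)
  qed
  have tmono': "t j \<le> t i" if "i \<le> j" for i j
    using q that t0 by (simp add: t_def power_decreasing mult_left_mono)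
  define B where "B j = ball (x - t j *\<^sub>R e) (\<delta> * t j)" for j
  have BO: "B j \<subseteq> \<Omega>" for j using balls tpos tle by (simp add: B_def)
  define c where "c j = 1 / ((1+\<delta>) * t j)^N" for j
  define \<theta> where "\<theta> = unit_ball_vol N * (\<delta>/(1+\<delta>))^N"
  have th0: "\<theta> > 0" using d by (simp add: \<theta>_def unit_ball_vol_pos)
  obtain J :: nat where J: "T < real J * \<theta>" using ex_less_of_nat_mult[OF th0] by blast
  define m where "m = 1/((1+\<delta>) * t J)^N"
  have m0: "m > 0" using d tpos[of J] by (simp add: m_def)
  have disj: "y \<notin> B j" if "y \<in> B i" "i < j" for y i j
  proof
    assume "y \<in> B j"
    then have a1: "dist (x - t j *\<^sub>R e) y < \<delta> * t j" by (simp add: B_def)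
    have a2: "dist (x - t i *\<^sub>R e) y < \<delta> * t i" using that(1) by (simp add: B_def)
    have "dist (x - t j *\<^sub>R e) (x - t i *\<^sub>R e) \<le> dist (x - t j *\<^sub>R e) y + dist y (x - t i *\<^sub>R e)"
      by (rule dist_triangle)
    then have a3: "dist (x - t j *\<^sub>R e) (x - t i *\<^sub>R e) < \<delta> * t j + \<delta> * t i"
      using a1 a2 by (simp add: dist_commute)
    have "dist (x - t j *\<^sub>R e) (x - t i *\<^sub>R e) = norm ((t i - t j) *\<^sub>R e)"
      by (simp add: dist_norm algebra_simps)
    also have "\<dots> = \<bar>t i - t j\<bar>" using ne by simp
    finally have a4: "\<bar>t i - t j\<bar> < \<delta> * t j + \<delta> * t i" using a3 by simp
    have "(1+\<delta>) * t j \<le> (1+\<delta>) * (q * t i)" using tmono[OF that(2)] d by (intro mult_left_mono) auto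
    also have "(1+\<delta>) * (q * t i) = (1-\<delta>) * t i" using d by (simp add: q_def)
    finally have "t j + \<delta> * t j \<le> t i - \<delta> * t i" by (simp add: algebra_simps)
    then show False using a4 by linarith
  qed
  have ptw: "(\<Sum>j<J. c j * indicator (B j) y) \<le> phi m (x - y)" for y
  proof (cases "\<exists>i<J. y \<in> B i")
    case True
    then obtain i where i: "i < J" "y \<in> B i" by blast
    have oth: "c j * indicator (B j) y = 0" if j: "j \<in> {..<J} - {i}" for j
    proof -
      have "j \<noteq> i" using j by auto
      then have "y \<notin> B j" using disj[of y i j] disj[of y j i] i(2) by (metis linorder_neqE_nat)
      then show ?thesis by simp
    qed
    have "(\<Sum>j<J. c j * indicator (B j) y) = c i * indicator (B i) y + (\<Sum>j\<in>{..<J} - {i}. c j * indicator (B j) y)"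
      using i by (intro sum.remove) auto
    also have "\<dots> = c i"
    proof -
      have "(\<Sum>j\<in>{..<J} - {i}. c j * indicator (B j) y) = 0" using oth by (intro sum.neutral) blast
      then show ?thesis using i by simp
    qed
    also have "c i \<le> phi m (x - y)"
    proof -
      have "norm (x - y) \<le> dist x (x - t i *\<^sub>R e) + dist (x - t i *\<^sub>R e) y"
        by (metis dist_norm dist_triangle)
      also have "dist x (x - t i *\<^sub>R e) = t i" using ne tpos[of i] by (simp add: dist_norm)
      finally have "norm (x - y) \<le> (1 + \<delta>) * t i" using i(2) by (simp add: B_def algebra_simps)
      then have a1: "norm (x - y) ^ N \<le> ((1 + \<delta>) * t i) ^ N" by (intro power_mono) auto
      have "(1 + \<delta>) * t J \<le> (1 + \<delta>) * t i" using tmono'[of i J] i d by (intro mult_left_mono) auto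
      then have "((1 + \<delta>) * t J) ^ N \<le> ((1 + \<delta>) * t i) ^ N" using d tpos[of J]
        by (intro power_mono) auto
      then have a2: "1/m \<le> ((1 + \<delta>) * t i) ^ N" by (simp add: m_def)
      have "max (1/m) (norm (x - y) ^ N) \<le> ((1 + \<delta>) * t i) ^ N" using a1 a2 by simp
      then show ?thesis unfolding c_def phi_def N_def[symmetric]
        using max_pos[OF m0] by (intro inv_anti) auto
    qed
    finally show ?thesis .
  next
    case False
    then have "(\<Sum>j<J. c j * indicator (B j) y) = 0" by (intro sum.neutral) auto
    then show ?thesis using phi_nonneg[OF m0] by simp
  qed
  have lm: "\<Omega> \<in> lmeasurable" using bo op by (rule lmeasurable_open)
  then have fm: "finite_measure (lebesgue_on \<Omega>)" by (rule finite_measure_lebesgue_on)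
  have Bmeas: "measure (lebesgue_on \<Omega>) (B j) = unit_ball_vol N * (\<delta> * t j) ^ N" for j
  proof -
    have "measure (lebesgue_on \<Omega>) (B j) = measure lebesgue (B j)"
      using BO op by (intro measure_restrict_space) auto
    also have "\<dots> = unit_ball_vol N * (\<delta> * t j) ^ N" unfolding B_def N_def
      using d tpos[of j] by (intro measure_ball_leb) auto
    finally show ?thesis .
  qed
  have intB: "integrable (lebesgue_on \<Omega>) (\<lambda>y. c j * indicator (B j) y)" for j
  proof (rule finite_measure.integrable_const_bound[OF fm, where B="\<bar>c j\<bar>"])
    show "AE x in lebesgue_on \<Omega>. norm (c j * indicator (B j) x) \<le> \<bar>c j\<bar>"
      by (auto simp: indicator_def)
    have "B j \<in> sets borel" by (simp add: B_def)
    then have "indicator (B j) \<in> borel_measurable borel" by simp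
    from measurable_compose[OF idm[of \<Omega>] this]
    have h: "indicator (B j) \<in> borel_measurable (lebesgue_on \<Omega>)" by simp
    show "(\<lambda>y. c j * indicator (B j) y) \<in> borel_measurable (lebesgue_on \<Omega>)"
      by (intro borel_measurable_times borel_measurable_const h)
  qed
  have intphi: "integrable (lebesgue_on \<Omega>) (\<lambda>y. phi m (x - y))"
    by (intro finite_measure.integrable_const_bound[OF fm, where B=m] phi_meas[OF m0] AE_I2)
      (simp add: abs_of_nonneg phi_nonneg[OF m0] phi_le[OF m0])
  have "(\<integral>y. (\<Sum>j<J. c j * indicator (B j) y) \<partial>lebesgue_on \<Omega>) = (\<Sum>j<J. \<integral>y. c j * indicator (B j) y \<partial>lebesgue_on \<Omega>)"
    using intB by (intro Bochner_Integration.integral_sum) auto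
  also have "\<dots> = (\<Sum>j<J. \<theta>)"
  proof (intro sum.cong refl)
    fix j
    have "(\<integral>y. c j * indicator (B j) y \<partial>lebesgue_on \<Omega>) = c j * measure (lebesgue_on \<Omega>) (B j)"
      using BO by (simp add: Int_absorb2)
    also have "\<dots> = \<theta>"
    proof -
      have r: "(\<delta> * t j) / ((1+\<delta>) * t j) = \<delta>/(1+\<delta>)" using tpos[of j] by simp
      have "c j * measure (lebesgue_on \<Omega>) (B j) = unit_ball_vol N * ((\<delta> * t j) ^ N / ((1+\<delta>) * t j) ^ N)"
        unfolding Bmeas c_def by simp
      also have "\<dots> = \<theta>" unfolding \<theta>_def power_divide[symmetric] r ..
      finally show ?thesis .
    qed
    finally show "(\<integral>y. c j * indicator (B j) y \<partial>lebesgue_on \<Omega>) = \<theta>" .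
  qed
  also have "\<dots> = real J * \<theta>" by simp
  finally have eqS: "(\<integral>y. (\<Sum>j<J. c j * indicator (B j) y) \<partial>lebesgue_on \<Omega>) = real J * \<theta>" .
  have "(\<integral>y. (\<Sum>j<J. c j * indicator (B j) y) \<partial>lebesgue_on \<Omega>) \<le> (\<integral>y. phi m (x - y) \<partial>lebesgue_on \<Omega>)"
  proof (rule integral_mono)
    show "integrable (lebesgue_on \<Omega>) (\<lambda>y. \<Sum>j<J. c j * indicator (B j) y)"
      by (rule Bochner_Integration.integrable_sum, rule intB)
  qed (use intphi ptw in auto)
  then have "real J * \<theta> \<le> (\<integral>y. phi m (x - y) \<partial>lebesgue_on \<Omega>)" using eqS by simp
  then show ?thesis using J m0 by (intro exI[of _ m]) auto
qed


lemma phi_int: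
  fixes \<Omega> :: "'a::euclidean_space set"
  assumes "bounded \<Omega>" "open \<Omega>" "m > 0"
  shows "integrable (lebesgue_on \<Omega>) (\<lambda>y. phi m (x - y))"
proof -
  have fm: "finite_measure (lebesgue_on \<Omega>)"
    using assms by (intro finite_measure_lebesgue_on lmeasurable_open)
  show ?thesis
    by (intro finite_measure.integrable_const_bound[OF fm, where B=m] phi_meas[OF assms(3)] AE_I2)
      (simp add: abs_of_nonneg phi_nonneg[OF assms(3)] phi_le[OF assms(3)])
qed

lemma uniform:
  fixes \<Omega> :: "'a::euclidean_space set"
  assumes bo: "bounded \<Omega>" and op: "open \<Omega>" and lip: "lipschitz_set \<Omega>"
  shows "\<exists>m>0. \<forall>x\<in>\<Omega>. (\<integral>y. phi m (x - y) \<partial>lebesgue_on \<Omega>) \<ge> T"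
proof (rule ccontr)
  define G where "G m x = (\<integral>y. phi m (x - y) \<partial>lebesgue_on \<Omega>)" for m x
  assume nt: "\<not> ?thesis"
  have all: "\<forall>m>0. \<exists>x\<in>\<Omega>. G m x < T" using nt by (auto simp: G_def not_le)
  have "\<forall>n::nat. \<exists>x. x \<in> \<Omega> \<and> G (real n + 1) x < T"
  proof
    fix n :: nat
    have "real n + 1 > 0" by simp
    then show "\<exists>x. x \<in> \<Omega> \<and> G (real n + 1) x < T" using all by blast
  qed
  then have "\<exists>X. \<forall>n. X n \<in> \<Omega> \<and> G (real n + 1) (X n) < T" by (rule choice)
  then obtain X where X: "\<And>n. X n \<in> \<Omega>" "\<And>n. G (real n + 1) (X n) < T" by blast
  have "compact (closure \<Omega>)" using bo by (simp add: compact_closure)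
  then have sc: "seq_compact (closure \<Omega>)" by (rule compact_imp_seq_compact)
  have "\<forall>n. X n \<in> closure \<Omega>" using X(1) closure_subset by blast
  from seq_compactE[OF sc this] obtain l r where lr: "l \<in> closure \<Omega>" "strict_mono r" "(X \<circ> r) \<longlonglongrightarrow> l"
    by blast
  from cone_at[OF op lip lr(1)] obtain e \<delta> t0 where c: "norm e = 1" "0 < \<delta>" "\<delta> \<le> 1/2" "0 < t0"
     "\<forall>t. 0 < t \<and> t \<le> t0 \<longrightarrow> ball (l - t *\<^sub>R e) (\<delta> * t) \<subseteq> \<Omega>" by blast
  from diverge[OF bo op c, of T] obtain m where m: "m > 0" "G m l > T" unfolding G_def by blast
  have fm: "finite_measure (lebesgue_on \<Omega>)"
    using bo op by (intro finite_measure_lebesgue_on lmeasurable_open)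
  have lim: "(\<lambda>j. G m (X (r j))) \<longlonglongrightarrow> G m l"
    unfolding G_def
  proof (rule integral_dominated_convergence[where w="\<lambda>_. m"])
    show "(\<lambda>y. phi m (l - y)) \<in> borel_measurable (lebesgue_on \<Omega>)" by (rule phi_meas[OF m(1)])
    show "(\<lambda>y. phi m (X (r j) - y)) \<in> borel_measurable (lebesgue_on \<Omega>)" for j by (rule phi_meas[OF m(1)])
    show "integrable (lebesgue_on \<Omega>) (\<lambda>_. m)" using fm by (simp add: finite_measure.integrable_const)
    show "AE y in lebesgue_on \<Omega>. (\<lambda>j. phi m (X (r j) - y)) \<longlonglongrightarrow> phi m (l - y)"
    proof (rule AE_I2)
      fix y
      have "(\<lambda>j. X (r j) - y) \<longlonglongrightarrow> l - y" using lr(3) by (intro tendsto_diff tendsto_const) (simp add: o_def)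
      moreover have "isCont (phi m) (l - y)"
        by (rule continuous_on_interior[OF continuous_phi[OF m(1)]]) simp
      ultimately show "(\<lambda>j. phi m (X (r j) - y)) \<longlonglongrightarrow> phi m (l - y)"
        by (rule isCont_tendsto_compose[rotated])
    qed
    show "AE y in lebesgue_on \<Omega>. norm (phi m (X (r j) - y)) \<le> m" for j
      by (intro AE_I2) (simp add: abs_of_nonneg phi_nonneg[OF m(1)] phi_le[OF m(1)])
  qed
  have "G m l \<le> T"
  proof (rule LIMSEQ_le_const2[OF lim], intro exI allI impI)
    fix j assume j: "nat \<lceil>m\<rceil> \<le> j"
    have "j \<le> r j" using lr(2) by (rule seq_suble)
    then have mj: "m \<le> real (r j) + 1" using j by linarith
    have "G m (X (r j)) \<le> G (real (r j) + 1) (X (r j))"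
      unfolding G_def
      by (intro integral_mono phi_int[OF bo op] phi_mono m(1) mj) auto
    then show "G m (X (r j)) \<le> T" using X(2)[of "r j"] by linarith
  qed
  then show False using m(2) by linarith
qed


lemma int_fst:
  fixes g :: "'b \<Rightarrow> real"
  assumes fm: "finite_measure M" and g: "integrable M g"
  shows "integrable (M \<Otimes>\<^sub>M M) (\<lambda>p. g (fst p))"
proof -
  interpret F: finite_measure M by (rule fm)
  interpret P: pair_sigma_finite M M by (simp add: pair_sigma_finite_def F.sigma_finite_measure_axioms)
  have gm: "g \<in> borel_measurable M" using g by simp
  show ?thesis
  proof (rule P.Fubini_integrable)
    show "(\<lambda>p. g (fst p)) \<in> borel_measurable (M \<Otimes>\<^sub>M M)" using gm by measurable
    have "integrable M (\<lambda>x. norm (g x) * measure M (space M))" using g by simp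
    then show "integrable M (\<lambda>x. \<integral>y. norm (g (fst (x, y))) \<partial>M)" by (simp add: mult.commute)
    show "AE x in M. integrable M (\<lambda>y. g (fst (x, y)))" by simp
  qed
qed

lemma int_snd:
  fixes g :: "'b \<Rightarrow> real"
  assumes fm: "finite_measure M" and g: "integrable M g"
  shows "integrable (M \<Otimes>\<^sub>M M) (\<lambda>p. g (snd p))"
proof -
  interpret F: finite_measure M by (rule fm)
  interpret P: pair_sigma_finite M M by (simp add: pair_sigma_finite_def F.sigma_finite_measure_axioms)
  have gm: "g \<in> borel_measurable M" using g by simp
  show ?thesis
  proof (rule P.Fubini_integrable)
    show "(\<lambda>p. g (snd p)) \<in> borel_measurable (M \<Otimes>\<^sub>M M)" using gm by measurable
    show "integrable M (\<lambda>x. \<integral>y. norm (g (snd (x, y))) \<partial>M)" by simp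
    show "AE x in M. integrable M (\<lambda>y. g (snd (x, y)))" using g by simp
  qed
qed


lemma trunc_prod: "0 \<le> ((p::real) - q) * (max (p - k) 0 - max (q - k) 0)"
proof (cases "p \<le> k")
  case True
  then show ?thesis
    by (cases "q \<le> k") (simp_all add: max_def mult_nonpos_nonpos)
next
  case False
  then show ?thesis
    by (cases "q \<le> k") (simp_all add: max_def mult_nonneg_nonneg)
qed
lemma trunc_diff: "\<bar>max ((p::real) - k) 0 - max (q - k) 0\<bar> \<le> \<bar>p - q\<bar>"
  by (cases "p \<le> k"; cases "q \<le> k") (simp_all add: max_def)
lemma abs_le_sq: "\<bar>x::real\<bar> \<le> 1 + x\<^sup>2"
proof -
  have sq: "(\<bar>x\<bar> - 1)\<^sup>2 = x\<^sup>2 - 2 * \<bar>x\<bar> + 1"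
    by (simp add: power2_eq_square algebra_simps)
  have "0 \<le> (\<bar>x\<bar> - 1)\<^sup>2" by simp
  then show ?thesis unfolding sq by simp
qed

lemma sq_bound: "\<bar>p::real\<bar> * (\<bar>p\<bar> + \<bar>q\<bar>) \<le> 2 * p\<^sup>2 + q\<^sup>2"
proof -
  have e1: "(\<bar>p\<bar> - \<bar>q\<bar>)\<^sup>2 = p\<^sup>2 - 2 * (\<bar>p\<bar> * \<bar>q\<bar>) + q\<^sup>2"
    by (simp add: power2_eq_square algebra_simps)
  have e2: "\<bar>p\<bar> * (\<bar>p\<bar> + \<bar>q\<bar>) = p\<^sup>2 + \<bar>p\<bar> * \<bar>q\<bar>"
    by (simp add: power2_eq_square algebra_simps)
  have "0 \<le> (\<bar>p\<bar> - \<bar>q\<bar>)\<^sup>2" by simp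
  then show ?thesis unfolding e2 using e1 by (simp add: zero_le_power2) (smt (verit) zero_le_power2)
qed

lemma abs_le_sq2: "\<bar>x::real\<bar> \<le> (1 + x\<^sup>2) / 2"
proof -
  have sq: "(\<bar>x\<bar> - 1)\<^sup>2 = x\<^sup>2 - 2 * \<bar>x\<bar> + 1"
    by (simp add: power2_eq_square algebra_simps)
  have "0 \<le> (\<bar>x\<bar> - 1)\<^sup>2" by simp
  then show ?thesis unfolding sq by simp
qed

lemma kern_nonneg: "0 \<le> kern s x y"
  by (simp add: kern_def)

lemma kern_sym: "kern s x y = kern s y x"
  by (simp add: kern_def norm_minus_commute)

lemma main_bound:
  fixes \<Omega> :: "'a::euclidean_space set" and u V f :: "'a \<Rightarrow> real" and Kf :: "'a \<times> 'a \<Rightarrow> real"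
  assumes bo: "bounded \<Omega>" and op: "open \<Omega>"
    and uH: "u \<in> Hs s \<Omega>"
    and weak: "\<forall>\<phi>\<in>Hs s \<Omega>. Es s \<Omega> u \<phi> + (\<integral>x. V x * u x * \<phi> x \<partial>lebesgue_on \<Omega>) = (\<integral>x. f x * \<phi> x \<partial>lebesgue_on \<Omega>)"
    and Vm: "V \<in> borel_measurable (lebesgue_on \<Omega>)" and fmeas: "f \<in> borel_measurable (lebesgue_on \<Omega>)"
    and Va: "AE x in lebesgue_on \<Omega>. \<bar>V x\<bar> \<le> a" and fb: "AE x in lebesgue_on \<Omega>. \<bar>f x\<bar> \<le> b"
    and Kfm: "Kf \<in> borel_measurable (lebesgue_on \<Omega> \<Otimes>\<^sub>M lebesgue_on \<Omega>)"
    and Kf0: "\<And>x y. 0 \<le> Kf (x,y)" and KfK: "\<And>x y. Kf (x,y) \<le> kern s x y"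
    and Kfsym: "\<And>x y. Kf (x,y) = Kf (y,x)"
    and Kfb: "\<And>x y. Kf (x,y) \<le> B"
    and hbig: "\<And>x. x \<in> \<Omega> \<Longrightarrow> a + 1 \<le> (\<integral>y. Kf (x,y) \<partial>lebesgue_on \<Omega>)"
    and k: "b + B * ((measure (lebesgue_on \<Omega>) \<Omega> + (\<integral>x. (u x)\<^sup>2 \<partial>lebesgue_on \<Omega>)) / 2) \<le> k"
    and k0: "0 \<le> k"
  shows "AE x in lebesgue_on \<Omega>. u x \<le> k"
proof -
  define M where "M = lebesgue_on \<Omega>"
  have fm: "finite_measure M" unfolding M_def using bo op by (intro finite_measure_lebesgue_on lmeasurable_open)
  interpret F: finite_measure M by (rule fm)
  interpret P: pair_sigma_finite M M by (simp add: pair_sigma_finite_def F.sigma_finite_measure_axioms)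
  have sp: "space M = \<Omega>" by (simp add: M_def)
  have idM[measurable]: "(\<lambda>x. x) \<in> borel_measurable M" unfolding M_def by (rule idm)
  have um[measurable]: "u \<in> borel_measurable M" and u2: "integrable M (\<lambda>x. (u x)\<^sup>2)"
    and uP: "integrable (M \<Otimes>\<^sub>M M) (\<lambda>(x, y). (u x - u y)\<^sup>2 * kern s x y)"
    using uH by (auto simp: Hs_def L2_def M_def)
  have Kfm'[measurable]: "Kf \<in> borel_measurable (M \<Otimes>\<^sub>M M)" using Kfm by (simp add: M_def)
  have Vm'[measurable]: "V \<in> borel_measurable M" and fm'[measurable]: "f \<in> borel_measurable M"
    using Vm fmeas by (simp_all add: M_def)
  have kernm[measurable]: "(\<lambda>(x,y). kern s x y) \<in> borel_measurable (M \<Otimes>\<^sub>M M)"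
    unfolding kern_def by measurable
  have B0: "0 \<le> B" using Kf0 Kfb by (meson order_trans)
  have u1: "integrable M (\<lambda>x. \<bar>u x\<bar>)"
  proof (rule Bochner_Integration.integrable_bound[where f="\<lambda>x. 1 + (u x)\<^sup>2"])
    show "integrable M (\<lambda>x. 1 + (u x)\<^sup>2)" by (intro Bochner_Integration.integrable_add F.integrable_const u2)
    show "AE x in M. norm \<bar>u x\<bar> \<le> norm (1 + (u x)\<^sup>2)"
    proof (rule AE_I2)
      fix x
      have "\<bar>u x\<bar> \<le> 1 + (u x)\<^sup>2" by (rule abs_le_sq)
      then show "norm \<bar>u x\<bar> \<le> norm (1 + (u x)\<^sup>2)" by simp
    qed
  qed simp
  have uint: "integrable M u" by (rule Bochner_Integration.integrable_bound[OF u1]) auto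
  define w where "w x = max (u x - k) 0" for x
  have wm[measurable]: "w \<in> borel_measurable M" unfolding w_def by measurable
  have w0: "0 \<le> w x" for x by (simp add: w_def)
  have wu: "w x \<le> \<bar>u x\<bar>" for x using k0 by (simp add: w_def)
  have wdiff: "\<bar>w x - w y\<bar> \<le> \<bar>u x - u y\<bar>" for x y unfolding w_def by (rule trunc_diff)
  have wprod: "0 \<le> (u x - u y) * (w x - w y)" for x y unfolding w_def by (rule trunc_prod)
  have wprod2: "(u x - u y) * (w x - w y) \<le> (u x - u y)\<^sup>2" for x y
  proof -
    have "(u x - u y) * (w x - w y) \<le> \<bar>u x - u y\<bar> * \<bar>w x - w y\<bar>" by (simp add: abs_mult[symmetric])
    also have "\<dots> \<le> \<bar>u x - u y\<bar> * \<bar>u x - u y\<bar>" using wdiff by (intro mult_left_mono) auto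
    finally show ?thesis by (simp add: power2_eq_square)
  qed
  have uwpos: "0 \<le> u x * w x" for x using k0 by (cases "u x \<le> k") (simp_all add: w_def max_def)
  have w2eq: "(w x)\<^sup>2 = u x * w x - k * w x" for x
    by (cases "u x \<le> k") (simp_all add: w_def max_def power2_eq_square algebra_simps)
  have w2le: "(w x)\<^sup>2 \<le> (u x)\<^sup>2" for x using power_mono[OF wu[of x] w0[of x], of 2] by simp
  have w2: "integrable M (\<lambda>x. (w x)\<^sup>2)"
  proof (rule Bochner_Integration.integrable_bound[OF u2])
    show "AE x in M. norm ((w x)\<^sup>2) \<le> norm ((u x)\<^sup>2)"
      using w2le by (intro AE_I2) simp
  qed simp
  have w1: "integrable M w"
    by (rule Bochner_Integration.integrable_bound[OF u1]) (auto intro!: AE_I2 simp: w0 wu)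
  have uwle: "\<bar>u x\<bar> * w x \<le> (u x)\<^sup>2" for x
  proof -
    have "\<bar>u x\<bar> * w x \<le> \<bar>u x\<bar> * \<bar>u x\<bar>" by (rule mult_left_mono[OF wu abs_ge_zero])
    then show ?thesis by (simp add: power2_eq_square)
  qed
  have uw: "integrable M (\<lambda>x. u x * w x)"
  proof (rule Bochner_Integration.integrable_bound[OF u2])
    show "AE x in M. norm (u x * w x) \<le> norm ((u x)\<^sup>2)"
      using uwle w0 by (intro AE_I2) (simp add: abs_mult)
  qed simp
  have wP: "integrable (M \<Otimes>\<^sub>M M) (\<lambda>(x, y). (w x - w y)\<^sup>2 * kern s x y)"
  proof (rule Bochner_Integration.integrable_bound[OF uP])
    show "AE p in M \<Otimes>\<^sub>M M. norm ((case p of (x, y) \<Rightarrow> (w x - w y)\<^sup>2 * kern s x y))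
            \<le> norm ((case p of (x, y) \<Rightarrow> (u x - u y)\<^sup>2 * kern s x y))"
    proof (rule AE_I2, clarify)
      fix x y
      have "(w x - w y)\<^sup>2 \<le> (u x - u y)\<^sup>2" using wdiff[of x y] by (simp add: abs_le_square_iff)
      then show "norm ((w x - w y)\<^sup>2 * kern s x y) \<le> norm ((u x - u y)\<^sup>2 * kern s x y)"
        using kern_nonneg[of s x y] by (simp add: abs_mult mult_right_mono)
    qed
  qed measurable
  have wH: "w \<in> Hs s \<Omega>" using wm w2 wP by (simp add: Hs_def L2_def M_def)
  have eq: "Es s \<Omega> u w + (\<integral>x. V x * u x * w x \<partial>M) = (\<integral>x. f x * w x \<partial>M)"
    using weak wH by (simp add: M_def)
  have fw: "integrable M (\<lambda>x. f x * w x)"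
  proof (rule Bochner_Integration.integrable_bound[where f="\<lambda>x. b * w x"])
    show "integrable M (\<lambda>x. b * w x)" using w1 by simp
    show "AE x in M. norm (f x * w x) \<le> norm (b * w x)"
      using fb unfolding M_def[symmetric]
    proof eventually_elim
      case (elim x)
      then have "\<bar>f x\<bar> * w x \<le> \<bar>b\<bar> * w x" using w0[of x] by (intro mult_right_mono) auto
      then show ?case using w0[of x] by (simp add: abs_mult)
    qed
  qed simp
  have Vuw: "integrable M (\<lambda>x. V x * u x * w x)"
  proof (rule Bochner_Integration.integrable_bound[where f="\<lambda>x. a * (u x)\<^sup>2"])
    show "integrable M (\<lambda>x. a * (u x)\<^sup>2)" using u2 by simp
    show "AE x in M. norm (V x * u x * w x) \<le> norm (a * (u x)\<^sup>2)"
      using Va unfolding M_def[symmetric]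
    proof eventually_elim
      case (elim x)
      have "\<bar>V x\<bar> * (\<bar>u x\<bar> * w x) \<le> \<bar>a\<bar> * (u x)\<^sup>2"
        using elim uwle[of x] w0[of x] by (intro mult_mono) auto
      then show ?case using w0[of x] by (simp add: abs_mult mult.assoc)
    qed
  qed simp
  have I1: "(\<integral>x. f x * w x \<partial>M) \<le> b * (\<integral>x. w x \<partial>M)"
  proof -
    have "(\<integral>x. f x * w x \<partial>M) \<le> (\<integral>x. b * w x \<partial>M)"
    proof (rule integral_mono_AE[OF fw])
      show "integrable M (\<lambda>x. b * w x)" using w1 by simp
      show "AE x in M. f x * w x \<le> b * w x"
        using fb unfolding M_def[symmetric]
        by eventually_elim (use w0 in \<open>auto intro: mult_right_mono\<close>)
    qed
    then show ?thesis by simp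
  qed
  have I2: "- (\<integral>x. V x * u x * w x \<partial>M) \<le> a * (\<integral>x. u x * w x \<partial>M)"
  proof -
    have "(\<integral>x. - (V x * u x * w x) \<partial>M) \<le> (\<integral>x. a * (u x * w x) \<partial>M)"
    proof (rule integral_mono_AE)
      show "integrable M (\<lambda>x. - (V x * u x * w x))" using Vuw by simp
      show "integrable M (\<lambda>x. a * (u x * w x))" using uw by simp
      show "AE x in M. - (V x * u x * w x) \<le> a * (u x * w x)"
        using Va unfolding M_def[symmetric]
      proof eventually_elim
        case (elim x)
        have "- V x * (u x * w x) \<le> a * (u x * w x)"
          using elim uwpos[of x] by (intro mult_right_mono) auto
        then show ?case by (simp add: mult.assoc)
      qed
    qed
    then show ?thesis by simp
  qed
  have upper: "Es s \<Omega> u w \<le> b * (\<integral>x. w x \<partial>M) + a * (\<integral>x. u x * w x \<partial>M)"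
    using eq I1 I2 by linarith
  define U where "U = (\<integral>x. \<bar>u x\<bar> \<partial>M)"
  define G where "G = (\<lambda>p. w (fst p) * (u (fst p) - u (snd p)) * Kf p)"
  have Gm[measurable]: "G \<in> borel_measurable (M \<Otimes>\<^sub>M M)" unfolding G_def by measurable
  have Kk: "Kf (x,y) \<le> kern s x y" for x y by (rule KfK)
  have intF: "integrable (M \<Otimes>\<^sub>M M) (\<lambda>(x,y). (u x - u y) * (w x - w y) * kern s x y)"
  proof (rule Bochner_Integration.integrable_bound[OF uP])
    show "AE p in M \<Otimes>\<^sub>M M. norm (case p of (x, y) \<Rightarrow> (u x - u y) * (w x - w y) * kern s x y)
            \<le> norm (case p of (x, y) \<Rightarrow> (u x - u y)\<^sup>2 * kern s x y)"
    proof (rule AE_I2, clarify)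
      fix x y
      have "(u x - u y) * (w x - w y) * kern s x y \<le> (u x - u y)\<^sup>2 * kern s x y"
        using wprod2[of x y] kern_nonneg[of s x y] by (intro mult_right_mono) auto
      then show "norm ((u x - u y) * (w x - w y) * kern s x y) \<le> norm ((u x - u y)\<^sup>2 * kern s x y)"
        using wprod[of x y] kern_nonneg[of s x y] by simp
    qed
  qed measurable
  have intFf: "integrable (M \<Otimes>\<^sub>M M) (\<lambda>(x,y). (u x - u y) * (w x - w y) * Kf (x,y))"
  proof (rule Bochner_Integration.integrable_bound[OF uP])
    show "AE p in M \<Otimes>\<^sub>M M. norm (case p of (x, y) \<Rightarrow> (u x - u y) * (w x - w y) * Kf (x,y))
            \<le> norm (case p of (x, y) \<Rightarrow> (u x - u y)\<^sup>2 * kern s x y)"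
    proof (rule AE_I2, clarify)
      fix x y
      have "(u x - u y) * (w x - w y) * Kf (x,y) \<le> (u x - u y)\<^sup>2 * kern s x y"
        using wprod2[of x y] wprod[of x y] Kk[of x y] Kf0[of x y] by (intro mult_mono) auto
      then show "norm ((u x - u y) * (w x - w y) * Kf (x,y)) \<le> norm ((u x - u y)\<^sup>2 * kern s x y)"
        using wprod[of x y] Kf0[of x y] by simp
    qed
  qed measurable
  have FF: "(\<integral>p. (case p of (x,y) \<Rightarrow> (u x - u y) * (w x - w y) * Kf (x,y)) \<partial>(M \<Otimes>\<^sub>M M))
            \<le> (\<integral>p. (case p of (x,y) \<Rightarrow> (u x - u y) * (w x - w y) * kern s x y) \<partial>(M \<Otimes>\<^sub>M M))"
  proof (rule integral_mono[OF intFf intF], clarify)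
    fix x y
    show "(u x - u y) * (w x - w y) * Kf (x,y) \<le> (u x - u y) * (w x - w y) * kern s x y"
      using wprod[of x y] Kk[of x y] by (intro mult_left_mono) auto
  qed
  have intG: "integrable (M \<Otimes>\<^sub>M M) G"
  proof (rule Bochner_Integration.integrable_bound[where f="\<lambda>p. B * (2 * (u (fst p))\<^sup>2) + B * (u (snd p))\<^sup>2"])
    show "integrable (M \<Otimes>\<^sub>M M) (\<lambda>p. B * (2 * (u (fst p))\<^sup>2) + B * (u (snd p))\<^sup>2)"
      using int_fst[OF fm u2] int_snd[OF fm u2] by (intro Bochner_Integration.integrable_add) auto
    show "AE p in M \<Otimes>\<^sub>M M. norm (G p) \<le> norm (B * (2 * (u (fst p))\<^sup>2) + B * (u (snd p))\<^sup>2)"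
    proof (rule AE_I2, clarify)
      fix x y
      have "\<bar>G (x,y)\<bar> = w x * \<bar>u x - u y\<bar> * Kf (x,y)"
        using w0[of x] Kf0[of x y] by (simp add: G_def abs_mult)
      also have "\<dots> \<le> \<bar>u x\<bar> * (\<bar>u x\<bar> + \<bar>u y\<bar>) * B"
        using wu[of x] w0[of x] Kf0[of x y] Kfb[of x y]
        by (intro mult_mono) (auto simp: abs_triangle_ineq4)
      also have "\<dots> \<le> (2 * (u x)\<^sup>2 + (u y)\<^sup>2) * B"
        using sq_bound[of "u x" "u y"] B0 by (intro mult_right_mono) auto
      finally show "norm (G (x,y)) \<le> norm (B * (2 * (u (fst (x,y)))\<^sup>2) + B * (u (snd (x,y)))\<^sup>2)"
        using B0 by (simp add: algebra_simps)
    qed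
  qed simp
  have intGs: "integrable (M \<Otimes>\<^sub>M M) (\<lambda>(x,y). G (y,x))"
    using P.integrable_product_swap[OF intG] .
  have Ffeq: "(\<integral>p. (case p of (x,y) \<Rightarrow> (u x - u y) * (w x - w y) * Kf (x,y)) \<partial>(M \<Otimes>\<^sub>M M))
       = (\<integral>p. G p + (case p of (x,y) \<Rightarrow> G (y,x)) \<partial>(M \<Otimes>\<^sub>M M))"
  proof (rule Bochner_Integration.integral_cong[OF refl], clarify)
    fix x y
    show "(u x - u y) * (w x - w y) * Kf (x,y) = G (x,y) + G (y,x)"
      using Kfsym[of y x] by (simp add: G_def algebra_simps)
  qed
  also have "\<dots> = integral\<^sup>L (M \<Otimes>\<^sub>M M) G + (\<integral>p. (case p of (x,y) \<Rightarrow> G (y,x)) \<partial>(M \<Otimes>\<^sub>M M))"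
    by (rule Bochner_Integration.integral_add[OF intG intGs])
  also have "(\<integral>p. (case p of (x,y) \<Rightarrow> G (y,x)) \<partial>(M \<Otimes>\<^sub>M M)) = integral\<^sup>L (M \<Otimes>\<^sub>M M) G"
    by (rule P.integral_product_swap[OF Gm])
  finally have Ffeq2: "(\<integral>p. (case p of (x,y) \<Rightarrow> (u x - u y) * (w x - w y) * Kf (x,y)) \<partial>(M \<Otimes>\<^sub>M M))
       = 2 * integral\<^sup>L (M \<Otimes>\<^sub>M M) G" by simp
  have inner: "(a + 1) * (u x * w x) - (B * U) * w x \<le> (\<integral>y. G (x,y) \<partial>M)" if x: "x \<in> space M" for x
  proof -
    have Kxm: "(\<lambda>y. Kf (x,y)) \<in> borel_measurable M" using Kfm' x by (rule measurable_Pair2)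
    have intK: "integrable M (\<lambda>y. Kf (x,y))"
      by (rule finite_measure.integrable_const_bound[OF fm, where B=B]) (use Kxm Kf0 Kfb in auto)
    have intL: "integrable M (\<lambda>y. (u x * w x) * Kf (x,y) - (w x * B) * \<bar>u y\<bar>)"
      using intK u1 by (intro Bochner_Integration.integrable_diff Bochner_Integration.integrable_mult_right)
    have intR: "integrable M (\<lambda>y. G (x,y))"
    proof (rule Bochner_Integration.integrable_bound[where f="\<lambda>y. (w x * B) * (\<bar>u x\<bar> + \<bar>u y\<bar>)"])
      show "integrable M (\<lambda>y. (w x * B) * (\<bar>u x\<bar> + \<bar>u y\<bar>))"
        using u1 by (intro Bochner_Integration.integrable_mult_right Bochner_Integration.integrable_add F.integrable_const)
      show "(\<lambda>y. G (x,y)) \<in> borel_measurable M" unfolding G_def fst_conv snd_conv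
        by (intro borel_measurable_times borel_measurable_diff borel_measurable_const um Kxm)
      show "AE y in M. norm (G (x,y)) \<le> norm ((w x * B) * (\<bar>u x\<bar> + \<bar>u y\<bar>))"
      proof (rule AE_I2)
        fix y
        have "\<bar>G (x,y)\<bar> = w x * \<bar>u x - u y\<bar> * Kf (x,y)"
          using w0[of x] Kf0[of x y] by (simp add: G_def abs_mult)
        also have "\<dots> \<le> w x * (\<bar>u x\<bar> + \<bar>u y\<bar>) * B"
          using w0[of x] Kf0[of x y] Kfb[of x y]
          by (intro mult_mono) (auto simp: abs_triangle_ineq4 mult_left_mono)
        finally show "norm (G (x,y)) \<le> norm ((w x * B) * (\<bar>u x\<bar> + \<bar>u y\<bar>))"
          using w0[of x] B0 by (simp add: abs_mult algebra_simps)
      qed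
    qed
    have "(\<integral>y. (u x * w x) * Kf (x,y) - (w x * B) * \<bar>u y\<bar> \<partial>M) \<le> (\<integral>y. G (x,y) \<partial>M)"
    proof (rule integral_mono[OF intL intR])
      fix y
      have "u y * Kf (x,y) \<le> \<bar>u y\<bar> * B"
        using Kf0[of x y] Kfb[of x y] by (intro mult_mono) auto
      then have "w x * (u y * Kf (x,y)) \<le> w x * (\<bar>u y\<bar> * B)" using w0[of x] by (rule mult_left_mono)
      then show "(u x * w x) * Kf (x,y) - (w x * B) * \<bar>u y\<bar> \<le> G (x,y)"
        by (simp add: G_def algebra_simps)
    qed
    moreover have "(\<integral>y. (u x * w x) * Kf (x,y) - (w x * B) * \<bar>u y\<bar> \<partial>M)
        = (u x * w x) * (\<integral>y. Kf (x,y) \<partial>M) - (w x * B) * U"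
      unfolding U_def using intK u1
      by (simp add: Bochner_Integration.integral_diff Bochner_Integration.integral_mult_right)
    moreover have "(u x * w x) * (a + 1) \<le> (u x * w x) * (\<integral>y. Kf (x,y) \<partial>M)"
      using hbig[of x] x uwpos[of x] by (intro mult_left_mono) (auto simp: M_def)
    ultimately show ?thesis by (simp add: algebra_simps)
  qed
  have outer: "(a + 1) * (\<integral>x. u x * w x \<partial>M) - (B * U) * (\<integral>x. w x \<partial>M) \<le> integral\<^sup>L (M \<Otimes>\<^sub>M M) G"
  proof -
    have "(\<integral>x. (a + 1) * (u x * w x) - (B * U) * w x \<partial>M) \<le> (\<integral>x. (\<integral>y. G (x,y) \<partial>M) \<partial>M)"
    proof (rule integral_mono)
      show "integrable M (\<lambda>x. (a + 1) * (u x * w x) - (B * U) * w x)"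
        using uw w1 by (intro Bochner_Integration.integrable_diff Bochner_Integration.integrable_mult_right)
      show "integrable M (\<lambda>x. \<integral>y. G (x,y) \<partial>M)" by (rule P.integrable_fst'[OF intG])
    qed (rule inner)
    moreover have "(\<integral>x. (a + 1) * (u x * w x) - (B * U) * w x \<partial>M)
        = (a + 1) * (\<integral>x. u x * w x \<partial>M) - (B * U) * (\<integral>x. w x \<partial>M)"
      using uw w1 by (simp add: Bochner_Integration.integral_diff Bochner_Integration.integral_mult_right)
    moreover have "(\<integral>x. (\<integral>y. G (x,y) \<partial>M) \<partial>M) = integral\<^sup>L (M \<Otimes>\<^sub>M M) G"
      by (rule P.integral_fst'[OF intG])
    ultimately show ?thesis by simp
  qed
  have lower: "(a + 1) * (\<integral>x. u x * w x \<partial>M) - (B * U) * (\<integral>x. w x \<partial>M) \<le> Es s \<Omega> u w"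
  proof -
    have "Es s \<Omega> u w = 1/2 * (\<integral>p. (case p of (x,y) \<Rightarrow> (u x - u y) * (w x - w y) * kern s x y) \<partial>(M \<Otimes>\<^sub>M M))"
      by (simp add: Es_def M_def)
    then show ?thesis using FF Ffeq2 outer by linarith
  qed
  have Ule: "U \<le> (measure M \<Omega> + (\<integral>x. (u x)\<^sup>2 \<partial>M)) / 2"
  proof -
    have "U \<le> (\<integral>x. 1/2 + (u x)\<^sup>2 / 2 \<partial>M)" unfolding U_def
    proof (rule integral_mono[OF u1])
      show "integrable M (\<lambda>x. 1/2 + (u x)\<^sup>2 / 2)"
        using u2 by (intro Bochner_Integration.integrable_add F.integrable_const Bochner_Integration.integrable_divide)
      show "\<bar>u x\<bar> \<le> 1/2 + (u x)\<^sup>2 / 2" for x using abs_le_sq2[of "u x"] by simp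
    qed
    also have "\<dots> = measure M \<Omega> / 2 + (\<integral>x. (u x)\<^sup>2 \<partial>M) / 2"
      using u2 by (simp add: Bochner_Integration.integral_add sp)
    finally show ?thesis by simp
  qed
  have Iw0: "0 \<le> (\<integral>x. w x \<partial>M)" using w0 by (simp add: integral_nonneg)
  have kk: "b + B * U \<le> k" using k Ule B0 unfolding M_def
    by (smt (verit) mult_left_mono)
  have "(\<integral>x. u x * w x \<partial>M) \<le> (b + B * U) * (\<integral>x. w x \<partial>M)"
    using lower upper by (simp add: algebra_simps)
  also have "\<dots> \<le> k * (\<integral>x. w x \<partial>M)" using kk Iw0 by (rule mult_right_mono)
  finally have uwk: "(\<integral>x. u x * w x \<partial>M) \<le> k * (\<integral>x. w x \<partial>M)" .
  have "(\<integral>x. (w x)\<^sup>2 \<partial>M) = (\<integral>x. u x * w x - k * w x \<partial>M)" by (simp add: w2eq)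
  also have "\<dots> = (\<integral>x. u x * w x \<partial>M) - k * (\<integral>x. w x \<partial>M)"
    using uw w1 by (simp add: Bochner_Integration.integral_diff Bochner_Integration.integral_mult_right)
  finally have "(\<integral>x. (w x)\<^sup>2 \<partial>M) \<le> 0" using uwk by simp
  moreover have "0 \<le> (\<integral>x. (w x)\<^sup>2 \<partial>M)" by (simp add: integral_nonneg)
  ultimately have "(\<integral>x. (w x)\<^sup>2 \<partial>M) = 0" by simp
  then have "AE x in M. (w x)\<^sup>2 = 0" using integral_nonneg_eq_0_iff_AE[OF w2] by simp
  then have "AE x in M. u x \<le> k" by eventually_elim (simp add: w_def max_def split: if_splits)
  then show ?thesis unfolding M_def .
qed



lemma kern_ge:
  fixes x y :: "'a::euclidean_space"
  assumes s: "0 \<le> s" "s < 1" and xy: "x \<noteq> y" "dist x y \<le> D" and D: "1 \<le> D" and m: "m > 0"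
  shows "(1 / D\<^sup>2) * phi m (x - y) \<le> kern s x y"
proof -
  define t where "t = norm (x - y)"
  have t0: "0 < t" using xy by (simp add: t_def)
  have tD: "t \<le> D" using xy by (simp add: t_def dist_norm)
  have "t powr (2 * s) \<le> D powr (2 * s)" using t0 tD s by (intro powr_mono2) auto
  also have "\<dots> \<le> D powr 2" using D s by (intro powr_mono) auto
  also have "\<dots> = D\<^sup>2" using D by (simp add: powr_realpow)
  finally have p1: "t powr (2 * s) \<le> D\<^sup>2" .
  have eqk: "kern s x y = 1 / (t ^ DIM('a) * t powr (2 * s))"
    unfolding kern_def t_def[symmetric] using t0 by (simp add: powr_add powr_realpow)
  have pos: "0 < t ^ DIM('a) * t powr (2 * s)" using t0 by simp
  have "t ^ DIM('a) * t powr (2 * s) \<le> t ^ DIM('a) * D\<^sup>2" using p1 t0 by (intro mult_left_mono) auto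
  then have k1: "1 / (t ^ DIM('a) * D\<^sup>2) \<le> kern s x y" unfolding eqk using pos by (rule inv_anti[rotated])
  have "phi m (x - y) \<le> 1 / t ^ DIM('a)"
    unfolding phi_def t_def[symmetric] using t0 by (intro inv_anti) auto
  then have "(1 / D\<^sup>2) * phi m (x - y) \<le> (1 / D\<^sup>2) * (1 / t ^ DIM('a))" by (intro mult_left_mono) auto
  also have "\<dots> = 1 / (t ^ DIM('a) * D\<^sup>2)" by simp
  finally show ?thesis using k1 by linarith
qed

lemma ae_bound:
  assumes "g \<in> Linf \<Omega>"
  shows "AE x in lebesgue_on \<Omega>. \<bar>g x\<bar> \<le> Linf_norm \<Omega> g"
proof -
  define E where "E = esssup (lebesgue_on \<Omega>) (\<lambda>x. ereal \<bar>g x\<bar>)"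
  have Einf: "E < \<infinity>" using assms by (simp add: Linf_def E_def)
  have ae: "AE x in lebesgue_on \<Omega>. ereal \<bar>g x\<bar> \<le> E" unfolding E_def by (rule esssup_AE)
  show ?thesis
  proof (cases E)
    case (real r)
    then show ?thesis using ae by (simp add: Linf_norm_def E_def[symmetric])
  next
    case PInf
    then show ?thesis using Einf by simp
  next
    case MInf
    show ?thesis by (rule eventually_mono[OF ae]) (simp add: MInf)
  qed
qed

lemma real_ereal_le: "(E::ereal) \<le> ereal k \<Longrightarrow> 0 \<le> k \<Longrightarrow> real_of_ereal E \<le> k"
  by (cases E) auto

lemma sing_null:
  fixes x :: "'a::euclidean_space"
  assumes "x \<in> \<Omega>" "open \<Omega>"
  shows "AE y in lebesgue_on \<Omega>. y \<noteq> x"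
proof (rule AE_I')
  show "{x} \<in> null_sets (lebesgue_on \<Omega>)"
    using insert_null_sets_lebesgue_on_iff[of x \<Omega> "{}"] assms by auto
qed auto


lemma neg_Hs: "u \<in> Hs s \<Omega> \<Longrightarrow> (\<lambda>x. - u x) \<in> Hs s \<Omega>"
proof -
  assume u: "u \<in> Hs s \<Omega>"
  have e: "(\<lambda>(x, y). (- u x - - u y)\<^sup>2 * kern s x y) = (\<lambda>(x, y). (u x - u y)\<^sup>2 * kern s x y)"
    by (auto simp: fun_eq_iff power2_eq_square algebra_simps)
  have um: "u \<in> borel_measurable (lebesgue_on \<Omega>)" and u2: "integrable (lebesgue_on \<Omega>) (\<lambda>x. (u x)\<^sup>2)"
    and uP: "integrable (lebesgue_on \<Omega> \<Otimes>\<^sub>M lebesgue_on \<Omega>) (\<lambda>(x, y). (u x - u y)\<^sup>2 * kern s x y)"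
    using u by (auto simp: Hs_def L2_def)
  have P: "integrable (lebesgue_on \<Omega> \<Otimes>\<^sub>M lebesgue_on \<Omega>) (\<lambda>(x, y). (- u x - - u y)\<^sup>2 * kern s x y)"
    by (subst e) (rule uP)
  have m: "(\<lambda>x. - u x) \<in> borel_measurable (lebesgue_on \<Omega>)" using um by simp
  have sq: "integrable (lebesgue_on \<Omega>) (\<lambda>x. (- u x)\<^sup>2)" using u2 by simp
  show ?thesis unfolding Hs_def L2_def using m sq P by simp
qed

lemma neg_weak:
  assumes "\<forall>\<phi>\<in>Hs s \<Omega>. Es s \<Omega> u \<phi> + (\<integral>x. V x * u x * \<phi> x \<partial>lebesgue_on \<Omega>) = (\<integral>x. f x * \<phi> x \<partial>lebesgue_on \<Omega>)"
  shows "\<forall>\<phi>\<in>Hs s \<Omega>. Es s \<Omega> (\<lambda>x. - u x) \<phi> + (\<integral>x. V x * (- u x) * \<phi> x \<partial>lebesgue_on \<Omega>) = (\<integral>x. - f x * \<phi> x \<partial>lebesgue_on \<Omega>)"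
proof
  fix \<phi> assume p: "\<phi> \<in> Hs s \<Omega>"
  have e1: "Es s \<Omega> (\<lambda>x. - u x) \<phi> = - Es s \<Omega> u \<phi>"
  proof -
    have "(\<lambda>(x, y). (- u x - - u y) * (\<phi> x - \<phi> y) * kern s x y)
        = (\<lambda>p. - ((\<lambda>(x, y). (u x - u y) * (\<phi> x - \<phi> y) * kern s x y) p))"
      by (intro ext) (simp add: case_prod_beta algebra_simps)
    then show ?thesis unfolding Es_def by (simp only: Bochner_Integration.integral_minus)
  qed
  have e2: "(\<integral>x. V x * (- u x) * \<phi> x \<partial>lebesgue_on \<Omega>) = - (\<integral>x. V x * u x * \<phi> x \<partial>lebesgue_on \<Omega>)"
  proof -
    have "(\<lambda>x. V x * (- u x) * \<phi> x) = (\<lambda>x. - (V x * u x * \<phi> x))" by (intro ext) simp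
    then show ?thesis by (simp only: Bochner_Integration.integral_minus)
  qed
  have e3: "(\<integral>x. - f x * \<phi> x \<partial>lebesgue_on \<Omega>) = - (\<integral>x. f x * \<phi> x \<partial>lebesgue_on \<Omega>)"
  proof -
    have "(\<lambda>x. - f x * \<phi> x) = (\<lambda>x. - (f x * \<phi> x))" by (intro ext) simp
    then show ?thesis by (simp only: Bochner_Integration.integral_minus)
  qed
  have w: "Es s \<Omega> u \<phi> + (\<integral>x. V x * u x * \<phi> x \<partial>lebesgue_on \<Omega>) = (\<integral>x. f x * \<phi> x \<partial>lebesgue_on \<Omega>)"
    using assms p by (rule bspec)
  show "Es s \<Omega> (\<lambda>x. - u x) \<phi> + (\<integral>x. V x * (- u x) * \<phi> x \<partial>lebesgue_on \<Omega>) = (\<integral>x. - f x * \<phi> x \<partial>lebesgue_on \<Omega>)"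
    unfolding e1 e2 e3 using w by linarith
qed


theorem theorem1p4:
  fixes \<Omega> :: "'a::euclidean_space set"
  assumes "bounded \<Omega>" and "open \<Omega>" and "lipschitz_set \<Omega>"
  shows "\<exists>C :: real \<Rightarrow> real \<Rightarrow> real \<Rightarrow> real. (\<forall>a b c. C a b c > 0) \<and>
    (\<forall>s V f u. 0 \<le> s \<and> s < 1 \<and> V \<in> Linf \<Omega> \<and> f \<in> Linf \<Omega> \<and> u \<in> Hs s \<Omega> \<and>
       weak_solution s \<Omega> V f u \<longrightarrow>
       u \<in> Linf \<Omega> \<and> Linf_norm \<Omega> u \<le> C (Linf_norm \<Omega> V) (Linf_norm \<Omega> f) (L2_norm \<Omega> u))"
proof -
  note bo = assms(1) and op = assms(2) and lip = assms(3)
  obtain R where R: "\<forall>x\<in>\<Omega>. norm x \<le> R" using bo bounded_iff by blast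
  define D where "D = max 1 (2 * R)"
  have D1: "1 \<le> D" by (simp add: D_def)
  have Dd: "dist x y \<le> D" if "x \<in> \<Omega>" "y \<in> \<Omega>" for x y
  proof -
    have "dist x y \<le> norm x + norm y" by (simp add: dist_norm norm_triangle_ineq4)
    also have "\<dots> \<le> 2 * R"
    proof -
      have "norm x \<le> R" "norm y \<le> R" using R that by auto
      then show ?thesis by linarith
    qed
    finally show ?thesis by (simp add: D_def)
  qed
  define mf where "mf a = (SOME m. m > 0 \<and> (\<forall>x\<in>\<Omega>. D\<^sup>2 * (a + 1) \<le> (\<integral>y. phi m (x - y) \<partial>lebesgue_on \<Omega>)))" for a
  have mf: "mf a > 0 \<and> (\<forall>x\<in>\<Omega>. D\<^sup>2 * (a + 1) \<le> (\<integral>y. phi (mf a) (x - y) \<partial>lebesgue_on \<Omega>))" for a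
    unfolding mf_def by (rule someI_ex) (rule uniform[OF bo op lip])
  define C where "C a b c = max b 0 + (mf a / D\<^sup>2) * ((measure (lebesgue_on \<Omega>) \<Omega> + c\<^sup>2) / 2) + 1" for a b c
  have Cpos: "C a b c > 0" for a b c
  proof -
    have "0 \<le> mf a / D\<^sup>2" using mf[of a] by simp
    moreover have "0 \<le> (measure (lebesgue_on \<Omega>) \<Omega> + c\<^sup>2) / 2" by simp
    ultimately have "0 \<le> (mf a / D\<^sup>2) * ((measure (lebesgue_on \<Omega>) \<Omega> + c\<^sup>2) / 2)"
      by (rule mult_nonneg_nonneg)
    then show ?thesis unfolding C_def by linarith
  qed
  show ?thesis
  proof (rule exI[of _ C], rule conjI)
    show "\<forall>a b c. C a b c > 0" using Cpos by blast
  next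
    show "\<forall>s V f u. 0 \<le> s \<and> s < 1 \<and> V \<in> Linf \<Omega> \<and> f \<in> Linf \<Omega> \<and> u \<in> Hs s \<Omega> \<and>
       weak_solution s \<Omega> V f u \<longrightarrow>
       u \<in> Linf \<Omega> \<and> Linf_norm \<Omega> u \<le> C (Linf_norm \<Omega> V) (Linf_norm \<Omega> f) (L2_norm \<Omega> u)"
    proof (intro allI impI)
    fix s V f u
    assume H: "0 \<le> s \<and> s < 1 \<and> V \<in> Linf \<Omega> \<and> f \<in> Linf \<Omega> \<and> u \<in> Hs s \<Omega> \<and> weak_solution s \<Omega> V f u"
    then have s: "0 \<le> s" "s < 1" and VL: "V \<in> Linf \<Omega>" and fL: "f \<in> Linf \<Omega>" and uH: "u \<in> Hs s \<Omega>"
      and ws: "weak_solution s \<Omega> V f u" by auto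
    define a where "a = Linf_norm \<Omega> V"
    define b where "b = Linf_norm \<Omega> f"
    define c where "c = L2_norm \<Omega> u"
    define m where "m = mf a"
    define k where "k = C a b c"
    have m0: "m > 0" and mbig: "\<forall>x\<in>\<Omega>. D\<^sup>2 * (a + 1) \<le> (\<integral>y. phi m (x - y) \<partial>lebesgue_on \<Omega>)"
      using mf[of a] by (auto simp: m_def)
    define Kf where "Kf = (\<lambda>p :: 'a \<times> 'a. min (kern s (fst p) (snd p)) ((1 / D\<^sup>2) * phi m (fst p - snd p)))"
    have Vm: "V \<in> borel_measurable (lebesgue_on \<Omega>)" using VL by (simp add: Linf_def)
    have fm: "f \<in> borel_measurable (lebesgue_on \<Omega>)" using fL by (simp add: Linf_def)
    have Va: "AE x in lebesgue_on \<Omega>. \<bar>V x\<bar> \<le> a" unfolding a_def by (rule ae_bound[OF VL])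
    have fb: "AE x in lebesgue_on \<Omega>. \<bar>f x\<bar> \<le> max b 0"
      using ae_bound[OF fL] unfolding b_def by (rule eventually_mono) auto
    have weak: "\<forall>\<phi>\<in>Hs s \<Omega>. Es s \<Omega> u \<phi> + (\<integral>x. V x * u x * \<phi> x \<partial>lebesgue_on \<Omega>) = (\<integral>x. f x * \<phi> x \<partial>lebesgue_on \<Omega>)"
      using ws by (simp add: weak_solution_def)
    have phib[measurable]: "phi m \<in> borel_measurable borel"
      by (rule borel_measurable_continuous_onI[OF continuous_phi[OF m0]])
    have idb[measurable]: "(\<lambda>x. x) \<in> borel_measurable (lebesgue_on \<Omega>)" by (rule idm)
    have Kfm: "Kf \<in> borel_measurable (lebesgue_on \<Omega> \<Otimes>\<^sub>M lebesgue_on \<Omega>)"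
      unfolding Kf_def kern_def by measurable
    have Kf0: "0 \<le> Kf (x,y)" for x y
      unfolding Kf_def using kern_nonneg[of s x y] phi_nonneg[OF m0, of "x - y"] by simp
    have KfK: "Kf (x,y) \<le> kern s x y" for x y unfolding Kf_def by simp
    have phisym: "phi m (x - y) = phi m (y - x)" for x y by (simp add: phi_def norm_minus_commute)
    have Kfsym: "Kf (x,y) = Kf (y,x)" for x y unfolding Kf_def using kern_sym[of s x y] phisym[of x y] by simp
    have Kfb: "Kf (x,y) \<le> (1 / D\<^sup>2) * m" for x y
    proof -
      have "Kf (x,y) \<le> (1 / D\<^sup>2) * phi m (x - y)" unfolding Kf_def by simp
      also have "\<dots> \<le> (1 / D\<^sup>2) * m" using phi_le[OF m0] by (intro mult_left_mono) auto
      finally show ?thesis .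
    qed
    have hbig: "a + 1 \<le> (\<integral>y. Kf (x,y) \<partial>lebesgue_on \<Omega>)" if x: "x \<in> \<Omega>" for x
    proof -
      have "(\<integral>y. Kf (x,y) \<partial>lebesgue_on \<Omega>) = (\<integral>y. (1 / D\<^sup>2) * phi m (x - y) \<partial>lebesgue_on \<Omega>)"
      proof (rule integral_cong_AE)
        show "(\<lambda>y. Kf (x, y)) \<in> borel_measurable (lebesgue_on \<Omega>)"
          by (rule measurable_Pair2[OF Kfm]) (simp add: x)
        show "(\<lambda>y. (1 / D\<^sup>2) * phi m (x - y)) \<in> borel_measurable (lebesgue_on \<Omega>)" by measurable
        show "AE y in lebesgue_on \<Omega>. Kf (x, y) = (1 / D\<^sup>2) * phi m (x - y)"
          using sing_null[OF x op] AE_space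
        proof eventually_elim
          case (elim y)
          then have yx: "y \<noteq> x" and y: "y \<in> \<Omega>" by auto
          then have "(1 / D\<^sup>2) * phi m (x - y) \<le> kern s x y"
            using kern_ge[OF s _ Dd[OF x y] D1 m0] yx by simp
          then show "Kf (x, y) = (1 / D\<^sup>2) * phi m (x - y)" unfolding Kf_def by simp
        qed
      qed
      also have "\<dots> = (1 / D\<^sup>2) * (\<integral>y. phi m (x - y) \<partial>lebesgue_on \<Omega>)" by simp
      also have "\<dots> \<ge> (1 / D\<^sup>2) * (D\<^sup>2 * (a + 1))" using mbig x D1 by (intro mult_left_mono) auto
      moreover have "(1 / D\<^sup>2) * (D\<^sup>2 * (a + 1)) = a + 1" using D1 by simp
      ultimately show ?thesis by linarith
    qed
    have c2: "(\<integral>x. (u x)\<^sup>2 \<partial>lebesgue_on \<Omega>) = c\<^sup>2"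
      unfolding c_def L2_norm_def by (simp add: integral_nonneg)
    have kb: "max b 0 + (1 / D\<^sup>2 * m) * ((measure (lebesgue_on \<Omega>) \<Omega> + (\<integral>x. (u x)\<^sup>2 \<partial>lebesgue_on \<Omega>)) / 2) \<le> k"
      unfolding k_def C_def c2 m_def by simp
    have k0: "0 \<le> k" using Cpos[of a b c] by (simp add: k_def)
    have up: "AE x in lebesgue_on \<Omega>. u x \<le> k"
      by (rule main_bound[OF bo op uH weak Vm fm Va fb Kfm Kf0 KfK Kfsym Kfb hbig kb k0])
    have uH': "(\<lambda>x. - u x) \<in> Hs s \<Omega>" by (rule neg_Hs[OF uH])
    have weak': "\<forall>\<phi>\<in>Hs s \<Omega>. Es s \<Omega> (\<lambda>x. - u x) \<phi> + (\<integral>x. V x * (- u x) * \<phi> x \<partial>lebesgue_on \<Omega>) = (\<integral>x. - f x * \<phi> x \<partial>lebesgue_on \<Omega>)"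
      by (rule neg_weak[OF weak])
    have fm': "(\<lambda>x. - f x) \<in> borel_measurable (lebesgue_on \<Omega>)" using fm by simp
    have fb': "AE x in lebesgue_on \<Omega>. \<bar>- f x\<bar> \<le> max b 0" using fb by simp
    have kb': "max b 0 + (1 / D\<^sup>2 * m) * ((measure (lebesgue_on \<Omega>) \<Omega> + (\<integral>x. (- u x)\<^sup>2 \<partial>lebesgue_on \<Omega>)) / 2) \<le> k"
      using kb by simp
    have lo: "AE x in lebesgue_on \<Omega>. - u x \<le> k"
      by (rule main_bound[OF bo op uH' weak' Vm fm' Va fb' Kfm Kf0 KfK Kfsym Kfb hbig kb' k0])
    have ab: "AE x in lebesgue_on \<Omega>. ereal \<bar>u x\<bar> \<le> ereal k"
      using up lo by eventually_elim auto
    have um: "u \<in> borel_measurable (lebesgue_on \<Omega>)" using uH by (simp add: Hs_def L2_def)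
    have es: "esssup (lebesgue_on \<Omega>) (\<lambda>x. ereal \<bar>u x\<bar>) \<le> ereal k"
      by (rule esssup_I) (use um ab in auto)
    have "u \<in> Linf \<Omega>" unfolding Linf_def using um es by (auto simp: le_less_trans)
    moreover have "Linf_norm \<Omega> u \<le> k" unfolding Linf_norm_def using es k0 by (rule real_ereal_le)
    ultimately show "u \<in> Linf \<Omega> \<and> Linf_norm \<Omega> u \<le> C (Linf_norm \<Omega> V) (Linf_norm \<Omega> f) (L2_norm \<Omega> u)"
      by (simp add: k_def a_def b_def c_def)
    qed
  qed
qed

end
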